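(* Let $\sigma,b$ and $x$ be as in the context. There exist $\rho,\delta^*\in1/\mathcal{C}$ such that for every $y\in\mathbb{R}^2$ and every $\delta\le\delta^*$: if $|x-y|_{A_\delta(x)}\le\rho$, then for all $\xi\in\mathbb{R}^2$ \[ \frac14|\xi|_{A_\delta(x)}\le|\xi|_{A_\delta(y)}\le4|\xi|_{A_\delta(x)}. \]
   Context: $\sigma,b:\mathbb{R}^2\to\mathbb{R}^2$ are $C^3$; $\partial_gf=\sum_ig^i\partial_{x_i}f$, $[f,g]=\partial_gf-\partial_fg$. $A_\delta(z)$ is the matrix with columns $\delta^{1/2}\sigma(z),\delta^{3/2}[b,\sigma](z)$, and $|\xi|_{A_\delta(z)}=|A_\delta(z)^{-1}\xi|$. $\lambda(z)$ is the smallest eigenvalue of $A(z)A(z)^T$ with $A(z)$ having columns $\sigma(z),[b,\sigma](z)$; $n(z)=\sum_{k=0}^3\sum_{|\alpha|=k}(|\partial^\alpha b(z)|+|\partial^\alpha\sigma(z)|)$. Local hypotheses: $\lambda(z)\ge\Lambda\in(0,1]$, $n(z)\le N$ ($N\ge1$) for $|z-x|<1$; there is a differentiable $\kappa_\sigma$ with $\partial_\sigma\sigma=\kappa_\sigma\sigma$ and $|\kappa_\sigma|,|\nabla\kappa_\sigma|\le n$. $\mathcal{C}=\{K(N/\Lambda)^q:K,q\ge1\text{ universal}\}$, $1/\mathcal{C}=\{c:1/c\in\mathcal{C}\}$. *)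

theory Defs
  imports "HOL-Analysis.Analysis"
begin

type_synonym R2 = "real^2"

definition pd :: "2 \<Rightarrow> (R2 \<Rightarrow> 'b::real_normed_vector) \<Rightarrow> R2 \<Rightarrow> 'b" where
  "pd i f z = frechet_derivative f (at z) (axis i 1)"

definition pds :: "2 list \<Rightarrow> (R2 \<Rightarrow> 'b::real_normed_vector) \<Rightarrow> R2 \<Rightarrow> 'b" where
  "pds is f = foldr pd is f"

definition pdm :: "nat \<Rightarrow> nat \<Rightarrow> (R2 \<Rightarrow> 'b::real_normed_vector) \<Rightarrow> R2 \<Rightarrow> 'b" where
  "pdm j k f = pds (replicate j 1 @ replicate k 2) f"

definition C3 :: "(R2 \<Rightarrow> R2) \<Rightarrow> bool" where
  "C3 f \<longleftrightarrow> (\<forall>is. length is \<le> 2 \<longrightarrow> (\<forall>z. pds is f differentiable (at z)))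
            \<and> (\<forall>is. length is \<le> 3 \<longrightarrow> continuous_on UNIV (pds is f))"

definition dd :: "(R2 \<Rightarrow> R2) \<Rightarrow> (R2 \<Rightarrow> 'b::real_normed_vector) \<Rightarrow> R2 \<Rightarrow> 'b" where
  "dd g f z = (\<Sum>i\<in>UNIV. (g z $ i) *\<^sub>R pd i f z)"

definition lie :: "(R2 \<Rightarrow> R2) \<Rightarrow> (R2 \<Rightarrow> R2) \<Rightarrow> R2 \<Rightarrow> R2" where
  "lie f g z = dd g f z - dd f g z"

definition cols :: "R2 \<Rightarrow> R2 \<Rightarrow> real^2^2" where
  "cols u v = (\<chi> i j. if j = 1 then u $ i else v $ i)"

definition Adelta :: "(R2 \<Rightarrow> R2) \<Rightarrow> (R2 \<Rightarrow> R2) \<Rightarrow> real \<Rightarrow> R2 \<Rightarrow> real^2^2" where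
  "Adelta \<sigma> b \<delta> z = cols (sqrt \<delta> *\<^sub>R \<sigma> z) ((\<delta> powr (3/2)) *\<^sub>R lie b \<sigma> z)"

definition Amat :: "(R2 \<Rightarrow> R2) \<Rightarrow> (R2 \<Rightarrow> R2) \<Rightarrow> R2 \<Rightarrow> real^2^2" where
  "Amat \<sigma> b z = cols (\<sigma> z) (lie b \<sigma> z)"

definition anorm :: "real^2^2 \<Rightarrow> R2 \<Rightarrow> real" where
  "anorm A \<xi> = norm (matrix_inv A *v \<xi>)"

definition min_eig :: "real^2^2 \<Rightarrow> real" where
  "min_eig M = Min {t. det (M - t *\<^sub>R mat 1) = 0}"

definition lam :: "(R2 \<Rightarrow> R2) \<Rightarrow> (R2 \<Rightarrow> R2) \<Rightarrow> R2 \<Rightarrow> real" where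
  "lam \<sigma> b z = min_eig (Amat \<sigma> b z ** transpose (Amat \<sigma> b z))"

definition nfun :: "(R2 \<Rightarrow> R2) \<Rightarrow> (R2 \<Rightarrow> R2) \<Rightarrow> R2 \<Rightarrow> real" where
  "nfun \<sigma> b z = (\<Sum>k\<in>{0..3::nat}. \<Sum>j\<in>{0..k}.
      norm (pdm j (k - j) b z) + norm (pdm j (k - j) \<sigma> z))"

definition grad :: "(R2 \<Rightarrow> real) \<Rightarrow> R2 \<Rightarrow> R2" where
  "grad f z = (\<chi> i. pd i f z)"

definition local_hyp :: "(R2 \<Rightarrow> R2) \<Rightarrow> (R2 \<Rightarrow> R2) \<Rightarrow> R2 \<Rightarrow> real \<Rightarrow> real \<Rightarrow> bool" where
  "local_hyp \<sigma> b x \<Lambda> N \<longleftrightarrow>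
     C3 \<sigma> \<and> C3 b \<and> 0 < \<Lambda> \<and> \<Lambda> \<le> 1 \<and> 1 \<le> N \<and>
     (\<forall>z. dist z x < 1 \<longrightarrow> lam \<sigma> b z \<ge> \<Lambda> \<and> nfun \<sigma> b z \<le> N) \<and>
     (\<exists>\<kappa>::R2 \<Rightarrow> real. \<forall>z. dist z x < 1 \<longrightarrow>
        \<kappa> differentiable (at z) \<and>
        dd \<sigma> \<sigma> z = \<kappa> z *\<^sub>R \<sigma> z \<and>
        \<bar>\<kappa> z\<bar> \<le> nfun \<sigma> b z \<and> norm (grad \<kappa> z) \<le> nfun \<sigma> b z)"

end

theory Submission imports Defs begin

lemma pd_chain:
  fixes f :: "R2 \<Rightarrow> 'b::real_normed_vector"
  assumes "f differentiable (at (p + r *\<^sub>R e))"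
  shows "((\<lambda>s. f (p + s *\<^sub>R e)) has_vector_derivative frechet_derivative f (at (p + r *\<^sub>R e)) e) (at r within T)"
proof -
  let ?D = "frechet_derivative f (at (p + r *\<^sub>R e))"
  have d: "(f has_derivative ?D) (at (p + r *\<^sub>R e))"
    using assms frechet_derivative_works by blast
  have l: "linear ?D" using has_derivative_linear[OF d] .
  have g: "((\<lambda>s. p + s *\<^sub>R e) has_derivative (\<lambda>s. s *\<^sub>R e)) (at r within T)"
    by (auto intro!: derivative_eq_intros)
  have "((\<lambda>s. f (p + s *\<^sub>R e)) has_derivative (\<lambda>s. ?D (s *\<^sub>R e))) (at r within T)"
    using diff_chain_within[OF g has_derivative_at_withinI[OF d]] by (simp add: o_def)
  then show ?thesis unfolding has_vector_derivative_def
    using linear_scale[OF l] by simp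
qed

lemma leg1:
  fixes g :: "real \<Rightarrow> 'b::real_normed_vector"
  assumes "\<And>s. s \<in> closed_segment 0 t \<Longrightarrow> (g has_vector_derivative g' s) (at s within closed_segment 0 t)"
    and "\<And>s. s \<in> closed_segment 0 t \<Longrightarrow> norm (g' s) \<le> B"
  shows "norm (g t - g 0) \<le> B * \<bar>t\<bar>"
proof -
  have "norm (g t - g 0) \<le> B * norm (t - 0)"
  proof (rule differentiable_bound[where f'="\<lambda>s h. h *\<^sub>R g' s"])
    show "convex (closed_segment 0 t)" by simp
    show "\<And>x. x \<in> closed_segment 0 t \<Longrightarrow> (g has_derivative (\<lambda>h. h *\<^sub>R g' x)) (at x within closed_segment 0 t)"
      using assms(1) unfolding has_vector_derivative_def by blast
    show "\<And>x. x \<in> closed_segment 0 t \<Longrightarrow> onorm (\<lambda>h. h *\<^sub>R g' x) \<le> B"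
      using assms(2) by (intro onorm_le) (metis abs_ge_zero mult.commute mult_left_mono norm_scaleR real_norm_def)
  qed auto
  then show ?thesis by simp
qed

lemma seg_pt:
  assumes "s \<in> closed_segment 0 (t::real)"
  shows "p + s *\<^sub>R e \<in> closed_segment p (p + t *\<^sub>R e)" "\<bar>s\<bar> \<le> \<bar>t\<bar>"
proof -
  obtain u where u: "0 \<le> u" "u \<le> 1" "s = (1 - u) *\<^sub>R 0 + u *\<^sub>R t"
    using assms unfolding in_segment by blast
  have "p + s *\<^sub>R e = (1 - u) *\<^sub>R p + u *\<^sub>R (p + t *\<^sub>R e)"
    using u by (simp add: algebra_simps)
  then show "p + s *\<^sub>R e \<in> closed_segment p (p + t *\<^sub>R e)"
    unfolding in_segment using u by blast
  have "\<bar>s\<bar> = u * \<bar>t\<bar>" using u by (simp add: abs_mult)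
  then show "\<bar>s\<bar> \<le> \<bar>t\<bar>" using u by (simp add: mult_left_le_one_le)
qed

lemma seg_ball:
  fixes x :: "'a::real_normed_vector"
  assumes "dist p x < 1" "dist q x < 1" "z \<in> closed_segment p q"
  shows "dist z x < 1"
proof -
  have "closed_segment p q \<subseteq> ball x 1"
    using assms by (intro closed_segment_subset) (auto simp: dist_commute)
  then show ?thesis using assms(3) by (auto simp: dist_commute)
qed

lemma legf:
  fixes f :: "R2 \<Rightarrow> 'b::real_normed_vector"
  assumes diff: "\<forall>z. f differentiable (at z)"
    and p: "dist p x < 1" and q: "dist (p + t *\<^sub>R axis i 1) x < 1"
    and B: "\<forall>z. dist z x < 1 \<longrightarrow> norm (pd i f z) \<le> B"
  shows "norm (f (p + t *\<^sub>R axis i 1) - f p) \<le> B * \<bar>t\<bar>"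
proof -
  have "norm ((\<lambda>s. f (p + s *\<^sub>R axis i 1)) t - (\<lambda>s. f (p + s *\<^sub>R axis i 1)) 0) \<le> B * \<bar>t\<bar>"
  proof (rule leg1[where g'="\<lambda>s. pd i f (p + s *\<^sub>R axis i 1)"])
    fix s assume s: "s \<in> closed_segment 0 t"
    show "((\<lambda>s. f (p + s *\<^sub>R axis i 1)) has_vector_derivative pd i f (p + s *\<^sub>R axis i 1)) (at s within closed_segment 0 t)"
      unfolding pd_def using pd_chain diff by blast
    have "dist (p + s *\<^sub>R axis i 1) x < 1" using seg_ball[OF p q seg_pt(1)[OF s]] .
    then show "norm (pd i f (p + s *\<^sub>R axis i 1)) \<le> B" using B by blast
  qed
  then show ?thesis by simp
qed

lemma taylor1:
  fixes f :: "R2 \<Rightarrow> 'b::real_normed_vector"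
  assumes diff: "\<forall>z. f differentiable (at z)" and diff2: "\<forall>z. pd i f differentiable (at z)"
    and p: "dist p x < 1" and q: "dist (p + t *\<^sub>R axis i 1) x < 1"
    and B: "\<forall>z. dist z x < 1 \<longrightarrow> norm (pd i (pd i f) z) \<le> B"
  shows "norm (f (p + t *\<^sub>R axis i 1) - f p - t *\<^sub>R pd i f p) \<le> B * t^2"
proof -
  have B0: "0 \<le> B" using B p by (meson norm_ge_zero order_trans)
  have "norm ((\<lambda>s. f (p + s *\<^sub>R axis i 1) - s *\<^sub>R pd i f p) t - (\<lambda>s. f (p + s *\<^sub>R axis i 1) - s *\<^sub>R pd i f p) 0) \<le> (B * \<bar>t\<bar>) * \<bar>t\<bar>"
  proof (rule leg1[where g'="\<lambda>s. pd i f (p + s *\<^sub>R axis i 1) - pd i f p"])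
    fix s assume s: "s \<in> closed_segment 0 t"
    have "((\<lambda>s. f (p + s *\<^sub>R axis i 1)) has_vector_derivative pd i f (p + s *\<^sub>R axis i 1)) (at s within closed_segment 0 t)"
      unfolding pd_def using pd_chain diff by blast
    moreover have "((\<lambda>s. s *\<^sub>R pd i f p) has_vector_derivative pd i f p) (at s within closed_segment 0 t)"
      by (auto intro!: derivative_eq_intros)
    ultimately show "((\<lambda>s. f (p + s *\<^sub>R axis i 1) - s *\<^sub>R pd i f p) has_vector_derivative pd i f (p + s *\<^sub>R axis i 1) - pd i f p) (at s within closed_segment 0 t)"
      by (rule has_vector_derivative_diff)
    have ps: "dist (p + s *\<^sub>R axis i 1) x < 1" using seg_ball[OF p q seg_pt(1)[OF s]] .
    have "norm (pd i f (p + s *\<^sub>R axis i 1) - pd i f p) \<le> B * \<bar>s\<bar>"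
      using legf[OF diff2 p ps B] .
    also have "\<dots> \<le> B * \<bar>t\<bar>" using seg_pt(2)[OF s] B0 by (simp add: mult_left_mono)
    finally show "norm (pd i f (p + s *\<^sub>R axis i 1) - pd i f p) \<le> B * \<bar>t\<bar>" .
  qed
  then show ?thesis by (simp add: power2_eq_square abs_mult_self_eq mult.assoc algebra_simps)
qed

lemma dist_add_le: "dist (z + v) x \<le> dist z x + norm (v::'a::real_normed_vector)"
proof -
  have "norm (z + v - x) \<le> norm (z - x) + norm v"
    using norm_triangle_ineq[of "z - x" v] by (simp add: algebra_simps)
  then show ?thesis by (simp add: dist_norm)
qed

lemma pd1_dir2:
  fixes f :: "R2 \<Rightarrow> 'b::real_normed_vector"
  assumes diff: "\<forall>z. f differentiable (at z)" and diff2: "\<forall>z. pd 2 f differentiable (at z)"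
    and p: "dist p x < 1" and q: "dist (p + t *\<^sub>R axis 2 1) x < 1"
    and B: "\<forall>z. dist z x < 1 \<longrightarrow> norm (pd 1 (pd 2 f) z) \<le> B"
  shows "norm (pd 1 f (p + t *\<^sub>R axis 2 1) - pd 1 f p) \<le> B * \<bar>t\<bar>"
proof -
  define q0 where "q0 = p + t *\<^sub>R axis 2 1"
  define e1 where "e1 = (axis 1 1 :: R2)"
  define e2 where "e2 = (axis 2 1 :: R2)"
  define \<epsilon> where "\<epsilon> = min (1 - dist p x) (1 - dist q0 x)"
  have \<epsilon>: "\<epsilon> > 0" using p q by (simp add: \<epsilon>_def q0_def)
  have ne1: "norm e1 = 1" by (simp add: e1_def)
  have inb: "dist (z + s *\<^sub>R e1) x < 1" if "dist z x \<le> 1 - \<epsilon>" "\<bar>s\<bar> < \<epsilon>" for z s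
    using dist_add_le[of z "s *\<^sub>R e1" x] that ne1 by simp
  have pe: "dist p x \<le> 1 - \<epsilon>" "dist q0 x \<le> 1 - \<epsilon>" by (auto simp: \<epsilon>_def)
  have key: "norm ((f (q0 + s *\<^sub>R e1) - f q0) - (f (p + s *\<^sub>R e1) - f p)) \<le> B * \<bar>s\<bar> * \<bar>t\<bar>"
    if s: "\<bar>s\<bar> < \<epsilon>" for s
  proof -
    let ?\<phi> = "\<lambda>r. f ((p + s *\<^sub>R e1) + r *\<^sub>R e2) - f (p + r *\<^sub>R e2)"
    have ps: "dist (p + s *\<^sub>R e1) x < 1" using inb[OF pe(1) s] .
    have qs: "dist ((p + s *\<^sub>R e1) + t *\<^sub>R e2) x < 1"
    proof -
      have eq: "(p + s *\<^sub>R e1) + t *\<^sub>R e2 = q0 + s *\<^sub>R e1" by (simp add: q0_def e2_def algebra_simps)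
      show ?thesis using inb[OF pe(2) s] by (simp only: eq)
    qed
    have n\<phi>: "norm (?\<phi> t - ?\<phi> 0) \<le> (B * \<bar>s\<bar>) * \<bar>t\<bar>"
    proof (rule leg1[where g'="\<lambda>r. pd 2 f ((p + s *\<^sub>R e1) + r *\<^sub>R e2) - pd 2 f (p + r *\<^sub>R e2)"])
      fix r assume r: "r \<in> closed_segment 0 t"
      show "(?\<phi> has_vector_derivative pd 2 f ((p + s *\<^sub>R e1) + r *\<^sub>R e2) - pd 2 f (p + r *\<^sub>R e2)) (at r within closed_segment 0 t)"
        unfolding pd_def e2_def
        by (rule has_vector_derivative_diff; rule pd_chain; use diff in blast)
      have a: "dist (p + r *\<^sub>R e2) x < 1"
        using seg_ball[OF p q[folded e2_def] seg_pt(1)[OF r]] .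
      have b: "dist ((p + r *\<^sub>R e2) + s *\<^sub>R axis 1 1) x < 1"
      proof -
        have "dist ((p + s *\<^sub>R e1) + r *\<^sub>R e2) x < 1"
          using seg_ball[OF ps qs seg_pt(1)[OF r]] .
        moreover have "(p + s *\<^sub>R e1) + r *\<^sub>R e2 = (p + r *\<^sub>R e2) + s *\<^sub>R axis 1 1"
          by (simp add: e1_def algebra_simps)
        ultimately show ?thesis by simp
      qed
      have "norm (pd 2 f ((p + r *\<^sub>R e2) + s *\<^sub>R axis 1 1) - pd 2 f (p + r *\<^sub>R e2)) \<le> B * \<bar>s\<bar>"
        using legf[OF diff2 a b B] .
      moreover have eq: "(p + s *\<^sub>R e1) + r *\<^sub>R e2 = (p + r *\<^sub>R e2) + s *\<^sub>R axis 1 1"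
        by (simp add: e1_def algebra_simps)
      ultimately show "norm (pd 2 f ((p + s *\<^sub>R e1) + r *\<^sub>R e2) - pd 2 f (p + r *\<^sub>R e2)) \<le> B * \<bar>s\<bar>"
        by (simp only: eq)
    qed
    have e1: "(p + s *\<^sub>R e1) + t *\<^sub>R e2 = q0 + s *\<^sub>R e1" by (simp add: q0_def e2_def algebra_simps)
    have e2: "p + t *\<^sub>R e2 = q0" by (simp add: q0_def e2_def)
    have phi_t: "?\<phi> t = f (q0 + s *\<^sub>R e1) - f q0" by (simp only: e1 e2)
    have phi_0: "?\<phi> 0 = f (p + s *\<^sub>R e1) - f p" by (simp only: scale_zero_left add_0_right)
    from n\<phi> show ?thesis by (simp only: phi_t phi_0)
  qed
  have dq: "((\<lambda>s. f (q0 + s *\<^sub>R e1)) has_vector_derivative pd 1 f q0) (at 0)"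
    using pd_chain[of f q0 0 e1 UNIV] diff unfolding pd_def e1_def by simp
  have dp: "((\<lambda>s. f (p + s *\<^sub>R e1)) has_vector_derivative pd 1 f p) (at 0)"
    using pd_chain[of f p 0 e1 UNIV] diff unfolding pd_def e1_def by simp
  define Rq where "Rq s = norm (f (q0 + s *\<^sub>R e1) - f q0 - s *\<^sub>R pd 1 f q0) / \<bar>s\<bar>" for s
  define Rp where "Rp s = norm (f (p + s *\<^sub>R e1) - f p - s *\<^sub>R pd 1 f p) / \<bar>s\<bar>" for s
  have tq: "(Rq \<longlongrightarrow> 0) (at 0)"
    using dq unfolding has_vector_derivative_def has_derivative_iff_norm Rq_def by simp
  have tp: "(Rp \<longlongrightarrow> 0) (at 0)"
    using dp unfolding has_vector_derivative_def has_derivative_iff_norm Rp_def by simp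
  have lim: "((\<lambda>s. B * \<bar>t\<bar> + Rq s + Rp s) \<longlongrightarrow> B * \<bar>t\<bar> + 0 + 0) (at 0)"
    by (intro tendsto_intros tq tp)
  have ev: "eventually (\<lambda>s. norm (pd 1 f q0 - pd 1 f p) \<le> B * \<bar>t\<bar> + Rq s + Rp s) (at (0::real))"
    unfolding eventually_at
  proof (intro exI[of _ \<epsilon>] conjI allI impI ballI)
    show "\<epsilon> > 0" by (rule \<epsilon>)
    fix s :: real assume "s \<in> UNIV" "s \<noteq> 0 \<and> dist s 0 < \<epsilon>"
    then have s0: "s \<noteq> 0" and s: "\<bar>s\<bar> < \<epsilon>" by auto
    let ?A0 = "(f (q0 + s *\<^sub>R e1) - f q0) - (f (p + s *\<^sub>R e1) - f p)"
    let ?A1 = "f (q0 + s *\<^sub>R e1) - f q0 - s *\<^sub>R pd 1 f q0"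
    let ?A2 = "f (p + s *\<^sub>R e1) - f p - s *\<^sub>R pd 1 f p"
    have eq: "s *\<^sub>R (pd 1 f q0 - pd 1 f p) = ?A0 - ?A1 + ?A2" by (simp add: algebra_simps)
    have t1: "norm (?A0 - ?A1 + ?A2) \<le> norm (?A0 - ?A1) + norm ?A2" by (rule norm_triangle_ineq)
    have t2: "norm (?A0 - ?A1) \<le> norm ?A0 + norm ?A1" by (rule norm_triangle_ineq4)
    have "norm (?A0 - ?A1 + ?A2) \<le> norm ?A0 + norm ?A1 + norm ?A2" using t1 t2 by linarith
    also have "\<dots> \<le> B * \<bar>s\<bar> * \<bar>t\<bar> + Rq s * \<bar>s\<bar> + Rp s * \<bar>s\<bar>"
      using key[OF s] s0 by (simp add: Rq_def Rp_def)
    finally have "norm (s *\<^sub>R (pd 1 f q0 - pd 1 f p)) \<le> B * \<bar>s\<bar> * \<bar>t\<bar> + Rq s * \<bar>s\<bar> + Rp s * \<bar>s\<bar>"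
      by (simp only: eq)
    then have "\<bar>s\<bar> * norm (pd 1 f q0 - pd 1 f p) \<le> \<bar>s\<bar> * (B * \<bar>t\<bar> + Rq s + Rp s)"
      by (simp only: norm_scaleR) (simp add: algebra_simps)
    then show "norm (pd 1 f q0 - pd 1 f p) \<le> B * \<bar>t\<bar> + Rq s + Rp s"
      using s0 by simp
  qed
  have "norm (pd 1 f q0 - pd 1 f p) \<le> B * \<bar>t\<bar> + 0 + 0"
    by (rule tendsto_le[OF _ lim tendsto_const ev]) simp
  then show ?thesis by (simp add: q0_def)
qed

lemma vec_decomp: "(y::R2) = x + (y - x)$1 *\<^sub>R axis 1 1 + (y - x)$2 *\<^sub>R axis 2 1"
  by (simp add: vec_eq_iff forall_2 axis_def)

definition good :: "(R2 \<Rightarrow> R2) \<Rightarrow> R2 \<Rightarrow> real \<Rightarrow> bool" where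
  "good f x N \<longleftrightarrow> (\<forall>z. f differentiable (at z)) \<and> (\<forall>z. pd 1 f differentiable (at z)) \<and>
     (\<forall>z. pd 2 f differentiable (at z)) \<and>
     (\<forall>z. dist z x < 1 \<longrightarrow> norm (f z) \<le> N \<and> norm (pd 1 f z) \<le> N \<and> norm (pd 2 f z) \<le> N \<and>
        norm (pd 1 (pd 1 f) z) \<le> N \<and> norm (pd 1 (pd 2 f) z) \<le> N \<and> norm (pd 2 (pd 2 f) z) \<le> N)"

lemma corner:
  fixes x y :: R2
  assumes "norm (y - x) < 1"
  shows "dist (x + (y - x)$1 *\<^sub>R axis 1 1) x < 1"
        "x + (y - x)$1 *\<^sub>R axis 1 1 + (y - x)$2 *\<^sub>R axis 2 1 = y"
        "dist y x < 1" "dist x x < 1"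
proof -
  show "dist (x + (y - x)$1 *\<^sub>R axis 1 1) x < 1"
    using component_le_norm_cart[of "y - x" 1] assms by (simp add: dist_norm)
  show "x + (y - x)$1 *\<^sub>R axis 1 1 + (y - x)$2 *\<^sub>R axis 2 1 = y"
    using vec_decomp[of y x] by simp
  show "dist y x < 1" using assms by (simp add: dist_norm)
  show "dist x x < 1" by simp
qed

lemma lip2:
  fixes g :: "R2 \<Rightarrow> 'b::real_normed_vector"
  assumes diff: "\<forall>z. g differentiable (at z)" and h: "norm (y - x) < 1"
    and B1: "\<forall>z. dist z x < 1 \<longrightarrow> norm (pd 1 g z) \<le> N"
    and B2: "\<forall>z. dist z x < 1 \<longrightarrow> norm (pd 2 g z) \<le> N"
  shows "norm (g y - g x) \<le> 2 * N * norm (y - x)"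
proof -
  let ?c = "x + (y - x)$1 *\<^sub>R axis 1 1"
  note C = corner[OF h]
  have a: "norm (g ?c - g x) \<le> N * \<bar>(y - x)$1\<bar>"
    using legf[OF diff C(4) C(1) B1] .
  have b: "norm (g (?c + (y - x)$2 *\<^sub>R axis 2 1) - g ?c) \<le> N * \<bar>(y - x)$2\<bar>"
    using legf[OF diff C(1) _ B2, where t="(y - x)$2"] C(2,3) by simp
  have "norm (pd 1 g x) \<le> N" using B1 by simp
  then have N0: "0 \<le> N" using norm_ge_zero order_trans by blast
  have "norm (g y - g x) \<le> norm (g ?c - g x) + norm (g y - g ?c)"
    using norm_triangle_ineq[of "g ?c - g x" "g y - g ?c"] by simp
  also have "\<dots> \<le> N * \<bar>(y - x)$1\<bar> + N * \<bar>(y - x)$2\<bar>" using a b C(2) by simp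
  also have "\<dots> \<le> N * norm (y - x) + N * norm (y - x)"
    using component_le_norm_cart[of "y - x" 1] component_le_norm_cart[of "y - x" 2] N0
    by (intro add_mono mult_left_mono) auto
  finally show ?thesis by simp
qed

lemma lip_pd1:
  fixes f :: "R2 \<Rightarrow> R2"
  assumes g: "good f x N" and h: "norm (y - x) < 1"
  shows "norm (pd 1 f y - pd 1 f x) \<le> 2 * N * norm (y - x)"
proof -
  let ?c = "x + (y - x)$1 *\<^sub>R axis 1 1"
  note C = corner[OF h]
  have d0: "\<forall>z. f differentiable (at z)" and d1: "\<forall>z. pd 1 f differentiable (at z)"
    and d2: "\<forall>z. pd 2 f differentiable (at z)"
    and B11: "\<forall>z. dist z x < 1 \<longrightarrow> norm (pd 1 (pd 1 f) z) \<le> N"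
    and B12: "\<forall>z. dist z x < 1 \<longrightarrow> norm (pd 1 (pd 2 f) z) \<le> N"
    using g unfolding good_def by auto
  have a: "norm (pd 1 f ?c - pd 1 f x) \<le> N * \<bar>(y - x)$1\<bar>"
    using legf[OF d1 C(4) C(1) B11] .
  have b: "norm (pd 1 f (?c + (y - x)$2 *\<^sub>R axis 2 1) - pd 1 f ?c) \<le> N * \<bar>(y - x)$2\<bar>"
    using pd1_dir2[OF d0 d2 C(1) _ B12, where t="(y - x)$2"] C(2,3) by simp
  have "norm (pd 1 (pd 1 f) x) \<le> N" using B11 by simp
  then have N0: "0 \<le> N" using norm_ge_zero order_trans by blast
  have "norm (pd 1 f y - pd 1 f x) \<le> norm (pd 1 f ?c - pd 1 f x) + norm (pd 1 f y - pd 1 f ?c)"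
    using norm_triangle_ineq[of "pd 1 f ?c - pd 1 f x" "pd 1 f y - pd 1 f ?c"] by simp
  also have "\<dots> \<le> N * \<bar>(y - x)$1\<bar> + N * \<bar>(y - x)$2\<bar>" using a b C(2) by simp
  also have "\<dots> \<le> N * norm (y - x) + N * norm (y - x)"
    using component_le_norm_cart[of "y - x" 1] component_le_norm_cart[of "y - x" 2] N0
    by (intro add_mono mult_left_mono) auto
  finally show ?thesis by simp
qed

lemma lip_f:
  assumes g: "good f x N" and h: "norm (y - x) < 1"
  shows "norm (f y - f x) \<le> 2 * N * norm (y - x)"
  using lip2[OF _ h, of f N] g unfolding good_def by auto

lemma lip_pd2:
  assumes g: "good f x N" and h: "norm (y - x) < 1"
  shows "norm (pd 2 f y - pd 2 f x) \<le> 2 * N * norm (y - x)"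
  using lip2[OF _ h, of "pd 2 f" N] g unfolding good_def by auto

lemma taylor2:
  fixes f :: "R2 \<Rightarrow> R2"
  assumes g: "good f x N" and h: "norm (y - x) < 1"
  shows "norm (f y - f x - ((y - x)$1 *\<^sub>R pd 1 f x + (y - x)$2 *\<^sub>R pd 2 f x)) \<le> 3 * N * (norm (y - x))^2"
proof -
  define h1 where "h1 = (y - x)$1"
  define h2 where "h2 = (y - x)$2"
  define c where "c = x + h1 *\<^sub>R axis 1 1"
  note C = corner[OF h, folded h1_def h2_def c_def]
  have d0: "\<forall>z. f differentiable (at z)" and d1: "\<forall>z. pd 1 f differentiable (at z)"
    and d2: "\<forall>z. pd 2 f differentiable (at z)"
    and B11: "\<forall>z. dist z x < 1 \<longrightarrow> norm (pd 1 (pd 1 f) z) \<le> N"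
    and B12: "\<forall>z. dist z x < 1 \<longrightarrow> norm (pd 1 (pd 2 f) z) \<le> N"
    and B22: "\<forall>z. dist z x < 1 \<longrightarrow> norm (pd 2 (pd 2 f) z) \<le> N"
    using g unfolding good_def by auto
  have "norm (pd 1 (pd 1 f) x) \<le> N" using B11 by simp
  then have N0: "0 \<le> N" using norm_ge_zero order_trans by blast
  define T1 where "T1 = f c - f x - h1 *\<^sub>R pd 1 f x"
  define T2 where "T2 = f y - f c - h2 *\<^sub>R pd 2 f c"
  define T3 where "T3 = h2 *\<^sub>R (pd 2 f c - pd 2 f x)"
  have t1: "norm T1 \<le> N * h1^2" unfolding T1_def c_def using taylor1[OF d0 d1 C(4) C(1)[unfolded c_def] B11] .
  have t2: "norm T2 \<le> N * h2^2"
    using taylor1[OF d0 d2 C(1) _ B22, of h2] C(2,3) unfolding T2_def by simp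
  have "norm (pd 2 f c - pd 2 f x) \<le> N * \<bar>h1\<bar>"
    unfolding c_def using legf[OF d2 C(4) C(1)[unfolded c_def] B12] .
  then have "\<bar>h2\<bar> * norm (pd 2 f c - pd 2 f x) \<le> \<bar>h2\<bar> * (N * \<bar>h1\<bar>)"
    by (rule mult_left_mono) simp
  then have t3: "norm T3 \<le> N * (\<bar>h1\<bar> * \<bar>h2\<bar>)" unfolding T3_def
    by (simp add: mult.commute mult.left_commute)
  have eq: "f y - f x - (h1 *\<^sub>R pd 1 f x + h2 *\<^sub>R pd 2 f x) = T1 + T2 + T3"
    unfolding T1_def T2_def T3_def by (simp add: algebra_simps)
  have "norm (T1 + T2 + T3) \<le> norm T1 + norm T2 + norm T3"
    using norm_triangle_ineq[of "T1 + T2" T3] norm_triangle_ineq[of T1 T2] by linarith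
  also have "\<dots> \<le> N * h1^2 + N * h2^2 + N * (\<bar>h1\<bar> * \<bar>h2\<bar>)" using t1 t2 t3 by linarith
  also have "\<dots> \<le> N * (norm (y - x))^2 + N * (norm (y - x))^2 + N * ((norm (y - x)) * (norm (y - x)))"
  proof -
    have a1: "\<bar>h1\<bar> \<le> norm (y - x)" "\<bar>h2\<bar> \<le> norm (y - x)"
      unfolding h1_def h2_def by (rule component_le_norm_cart)+
    have "h1^2 \<le> (norm (y - x))^2" using power_mono[OF a1(1) abs_ge_zero, of 2] by simp
    moreover have "h2^2 \<le> (norm (y - x))^2" using power_mono[OF a1(2) abs_ge_zero, of 2] by simp
    moreover have "\<bar>h1\<bar> * \<bar>h2\<bar> \<le> norm (y - x) * norm (y - x)" using a1 by (intro mult_mono) auto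
    ultimately show ?thesis using N0 by (intro add_mono mult_left_mono) auto
  qed
  finally show ?thesis using eq by (simp add: h1_def h2_def power2_eq_square algebra_simps)
qed

lemma pdm_simps:
  "pdm 0 0 f = f" "pdm 1 0 f = pd 1 f" "pdm 0 1 f = pd 2 f"
  "pdm 2 0 f = pd 1 (pd 1 f)" "pdm 1 1 f = pd 1 (pd 2 f)" "pdm 0 2 f = pd 2 (pd 2 f)"
  by (simp_all add: pdm_def pds_def numeral_2_eq_2)

lemma pdm_simps2:
  "pdm (Suc 0) 0 f = pd 1 f" "pdm 0 (Suc 0) f = pd 2 f" "pdm (Suc 0) (Suc 0) f = pd 1 (pd 2 f)"
  by (simp_all add: pdm_def pds_def)

lemma nfun_ge:
  assumes "k \<le> 3" "j \<le> k"
  shows "norm (pdm j (k-j) \<sigma> z) \<le> nfun \<sigma> b z \<and> norm (pdm j (k-j) b z) \<le> nfun \<sigma> b z"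
proof -
  define T where "T k j = norm (pdm j (k - j) b z) + norm (pdm j (k - j) \<sigma> z)" for k j
  have "T k j \<le> (\<Sum>j\<in>{0..k}. T k j)"
    using assms by (intro member_le_sum) (auto simp: T_def)
  also have "\<dots> \<le> (\<Sum>k\<in>{0..3::nat}. \<Sum>j\<in>{0..k}. T k j)"
    using assms by (intro member_le_sum[where f="\<lambda>k. \<Sum>j\<in>{0..k}. T k j"] sum_nonneg) (auto simp: T_def)
  finally have "T k j \<le> nfun \<sigma> b z" unfolding nfun_def T_def .
  then show ?thesis unfolding T_def using norm_ge_zero[of "pdm j (k - j) b z"] norm_ge_zero[of "pdm j (k - j) \<sigma> z"] by linarith
qed

lemma C3_diff:
  assumes "C3 f"
  shows "\<forall>z. f differentiable (at z)" "\<forall>z. pd 1 f differentiable (at z)" "\<forall>z. pd 2 f differentiable (at z)"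
proof -
  have A: "\<forall>is. length is \<le> 2 \<longrightarrow> (\<forall>z. pds is f differentiable (at z))"
    using assms unfolding C3_def by blast
  show "\<forall>z. f differentiable (at z)" using A[rule_format, of "[]"] by (simp add: pds_def)
  show "\<forall>z. pd 1 f differentiable (at z)" using A[rule_format, of "[1]"] by (simp add: pds_def)
  show "\<forall>z. pd 2 f differentiable (at z)" using A[rule_format, of "[2]"] by (simp add: pds_def)
qed

lemma local_good:
  assumes "local_hyp \<sigma> b x \<Lambda> N"
  shows "good \<sigma> x N" "good b x N"
proof -
  have C: "C3 \<sigma>" "C3 b" and nb: "\<forall>z. dist z x < 1 \<longrightarrow> nfun \<sigma> b z \<le> N"
    using assms unfolding local_hyp_def by auto
  have bnd: "norm (pdm j (k-j) \<sigma> z) \<le> N \<and> norm (pdm j (k-j) b z) \<le> N"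
    if "dist z x < 1" "k \<le> 3" "j \<le> k" for z j k
    using nfun_ge[OF that(2,3), of \<sigma> z b] nb that(1) by auto
  have b00: "norm (\<sigma> z) \<le> N \<and> norm (b z) \<le> N" if "dist z x < 1" for z
    using bnd[OF that, of 0 0] by (simp add: pdm_simps pdm_simps2)
  have b10: "norm (pd 1 \<sigma> z) \<le> N \<and> norm (pd 1 b z) \<le> N" if "dist z x < 1" for z
    using bnd[OF that, of 1 1] unfolding diff_self_eq_0 pdm_simps(2) by simp
  have b01: "norm (pd 2 \<sigma> z) \<le> N \<and> norm (pd 2 b z) \<le> N" if "dist z x < 1" for z
    using bnd[OF that, of 1 0] by (simp add: pdm_simps pdm_simps2)
  have b20: "norm (pd 1 (pd 1 \<sigma>) z) \<le> N \<and> norm (pd 1 (pd 1 b) z) \<le> N" if "dist z x < 1" for z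
    using bnd[OF that, of 2 2] by (simp add: pdm_simps pdm_simps2)
  have b11: "norm (pd 1 (pd 2 \<sigma>) z) \<le> N \<and> norm (pd 1 (pd 2 b) z) \<le> N" if "dist z x < 1" for z
    using bnd[OF that, of 2 1] by (simp add: pdm_simps pdm_simps2)
  have b02: "norm (pd 2 (pd 2 \<sigma>) z) \<le> N \<and> norm (pd 2 (pd 2 b) z) \<le> N" if "dist z x < 1" for z
    using bnd[OF that, of 2 0] by (simp add: pdm_simps pdm_simps2)
  show "good \<sigma> x N" "good b x N"
    unfolding good_def using C3_diff[OF C(1)] C3_diff[OF C(2)] b00 b10 b01 b20 b11 b02 by auto
qed

lemma cols_mult: "cols u v *v z = z$1 *\<^sub>R u + z$2 *\<^sub>R v"
  by (simp add: vec_eq_iff matrix_vector_mult_def cols_def sum_2 forall_2 mult.commute)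

lemma det_cols: "det (cols u v) = u$1 * v$2 - v$1 * u$2"
  by (simp add: det_2 cols_def)

lemma minv: "invertible (A::real^2^2) \<Longrightarrow> A ** matrix_inv A = mat 1 \<and> matrix_inv A ** A = mat 1"
  unfolding invertible_def matrix_inv_def by (rule someI_ex)

lemma anorm_eq:
  assumes "det (A::real^2^2) \<noteq> 0" "A *v z = \<xi>"
  shows "anorm A \<xi> = norm z"
proof -
  have "invertible A" using assms(1) invertible_det_nz by blast
  then have "matrix_inv A ** A = mat 1" using minv by blast
  then have "matrix_inv A *v \<xi> = z" using assms(2) by (metis matrix_vector_mul_assoc matrix_vector_mul_lid)
  then show ?thesis by (simp add: anorm_def)
qed

lemma anorm_ex:
  assumes "det (A::real^2^2) \<noteq> 0"
  shows "\<exists>z. A *v z = \<xi> \<and> anorm A \<xi> = norm z"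
proof -
  have "invertible A" using assms(1) invertible_det_nz by blast
  then have "A ** matrix_inv A = mat 1" using minv by blast
  then have "A *v (matrix_inv A *v \<xi>) = \<xi>" by (metis matrix_vector_mul_assoc matrix_vector_mul_lid)
  then show ?thesis by (auto simp: anorm_def)
qed

lemma norm2: "norm (v::R2) = sqrt ((v$1)^2 + (v$2)^2)"
  by (simp add: norm_vec_def L2_set_def sum_2)

lemma cs2: "\<bar>a * d - b * c\<bar> \<le> sqrt (a^2 + b^2) * sqrt (c^2 + d^2)"
proof -
  have "(a * d - b * c)^2 \<le> (a^2 + b^2) * (c^2 + d^2)"
  proof -
    have "(a^2 + b^2) * (c^2 + d^2) - (a * d - b * c)^2 = (a * c + b * d)^2"
      by (simp add: power2_eq_square algebra_simps)
    then show ?thesis by (metis diff_ge_0_iff_ge zero_le_power2)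
  qed
  then have "sqrt ((a * d - b * c)^2) \<le> sqrt ((a^2 + b^2) * (c^2 + d^2))"
    by (rule real_sqrt_le_mono)
  then show ?thesis by (simp add: real_sqrt_mult)
qed

lemma decomp:
  fixes u w v :: R2
  assumes d: "u$1 * w$2 - w$1 * u$2 \<noteq> 0"
  defines "dd0 \<equiv> u$1 * w$2 - w$1 * u$2"
  shows "\<exists>\<alpha> \<beta>. v = \<alpha> *\<^sub>R u + \<beta> *\<^sub>R w \<and> \<bar>\<alpha>\<bar> \<le> norm w * norm v / \<bar>dd0\<bar> \<and> \<bar>\<beta>\<bar> \<le> norm u * norm v / \<bar>dd0\<bar>"
proof -
  define \<alpha> where "\<alpha> = (w$2 * v$1 - w$1 * v$2) / dd0"
  define \<beta> where "\<beta> = (u$1 * v$2 - u$2 * v$1) / dd0"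
  have d0: "dd0 \<noteq> 0" using d by (simp add: dd0_def)
  have c1: "\<alpha> * u$1 + \<beta> * w$1 = v$1"
  proof -
    have "\<alpha> * u$1 + \<beta> * w$1 = ((w$2 * v$1 - w$1 * v$2) * u$1 + (u$1 * v$2 - u$2 * v$1) * w$1) / dd0"
      unfolding \<alpha>_def \<beta>_def by (simp add: add_divide_distrib)
    also have "(w$2 * v$1 - w$1 * v$2) * u$1 + (u$1 * v$2 - u$2 * v$1) * w$1 = v$1 * dd0"
      by (simp add: dd0_def algebra_simps)
    finally show ?thesis using d0 by simp
  qed
  have c2: "\<alpha> * u$2 + \<beta> * w$2 = v$2"
  proof -
    have "\<alpha> * u$2 + \<beta> * w$2 = ((w$2 * v$1 - w$1 * v$2) * u$2 + (u$1 * v$2 - u$2 * v$1) * w$2) / dd0"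
      unfolding \<alpha>_def \<beta>_def by (simp add: add_divide_distrib)
    also have "(w$2 * v$1 - w$1 * v$2) * u$2 + (u$1 * v$2 - u$2 * v$1) * w$2 = v$2 * dd0"
      by (simp add: dd0_def algebra_simps)
    finally show ?thesis using d0 by simp
  qed
  have "v = \<alpha> *\<^sub>R u + \<beta> *\<^sub>R w"
    using c1 c2 by (simp add: vec_eq_iff forall_2)
  moreover have "\<bar>\<alpha>\<bar> \<le> norm w * norm v / \<bar>dd0\<bar>"
  proof -
    have "\<bar>w$2 * v$1 - w$1 * v$2\<bar> \<le> norm w * norm v"
      using cs2[of "w$2" "v$1" "w$1" "v$2"] unfolding norm2 by (simp add: add.commute)
    then show ?thesis unfolding \<alpha>_def using d0 by (simp add: abs_div divide_right_mono)
  qed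
  moreover have "\<bar>\<beta>\<bar> \<le> norm u * norm v / \<bar>dd0\<bar>"
  proof -
    have "\<bar>u$1 * v$2 - u$2 * v$1\<bar> \<le> norm u * norm v"
      using cs2[of "u$1" "v$2" "u$2" "v$1"] unfolding norm2 .
    then show ?thesis unfolding \<beta>_def using d0 by (simp add: abs_div divide_right_mono)
  qed
  ultimately show ?thesis by blast
qed

lemma min_eig_det:
  fixes P :: "real^2^2"
  assumes sym: "P$1$2 = P$2$1" and L: "min_eig P \<ge> \<Lambda>" and L0: "\<Lambda> > 0"
  shows "det P \<ge> \<Lambda>^2"
proof -
  define p where "p = P$1$1"
  define q where "q = P$1$2"
  define r where "r = P$2$2"
  define D where "D = (p - r)^2 + 4 * q^2"
  have D0: "D \<ge> 0" by (simp add: D_def)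
  have sD: "sqrt D ^ 2 = D" using D0 by simp
  define t1 where "t1 = (p + r - sqrt D) / 2"
  define t2 where "t2 = (p + r + sqrt D) / 2"
  have detP: "det (P - t *\<^sub>R mat 1) = (p - t) * (r - t) - q^2" for t
    by (simp add: det_2 mat_def p_def q_def r_def sym power2_eq_square)
  have fac: "(p - t) * (r - t) - q^2 = (t - t1) * (t - t2)" for t
  proof -
    have "(t - t1) * (t - t2) = t^2 - (p + r) * t + ((p + r)^2 - sqrt D ^ 2) / 4"
      by (simp add: t1_def t2_def power2_eq_square field_simps)
    also have "\<dots> = t^2 - (p + r) * t + ((p + r)^2 - D) / 4"
      by (simp only: sD)
    also have "\<dots> = (p - t) * (r - t) - q^2"
      by (simp add: D_def power2_eq_square field_simps)
    finally show ?thesis by simp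
  qed
  define S where "S = {t. det (P - t *\<^sub>R mat 1) = 0}"
  have S: "S = {t1, t2}" unfolding S_def detP fac by auto
  have "min_eig P = Min S" by (simp add: min_eig_def S_def)
  then have "Min {t1, t2} \<ge> \<Lambda>" using L S by simp
  then have l1: "t1 \<ge> \<Lambda>" and l2: "t2 \<ge> \<Lambda>" by auto
  have "det P = (p - 0) * (r - 0) - q^2" using detP[of 0] by simp
  also have "\<dots> = t1 * t2" using fac[of 0] by simp
  finally have "det P = t1 * t2" .
  moreover have "t1 * t2 \<ge> \<Lambda> * \<Lambda>" using l1 l2 L0 by (intro mult_mono) auto
  ultimately show ?thesis by (simp add: power2_eq_square)
qed

lemma lam_det:
  assumes "lam \<sigma> b z \<ge> \<Lambda>" "\<Lambda> > 0"
  shows "\<bar>det (Amat \<sigma> b z)\<bar> \<ge> \<Lambda>"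
proof -
  let ?M = "Amat \<sigma> b z"
  have sym: "(?M ** transpose ?M)$1$2 = (?M ** transpose ?M)$2$1"
    by (simp add: matrix_matrix_mult_def transpose_def mult.commute)
  have "det (?M ** transpose ?M) \<ge> \<Lambda>^2"
    using min_eig_det[OF sym] assms unfolding lam_def by blast
  then have "(det ?M)^2 \<ge> \<Lambda>^2" by (simp add: det_mul power2_eq_square)
  then show ?thesis using abs_le_square_iff[of \<Lambda> "det ?M"] assms(2) by simp
qed

lemma norm_le_2: "norm (v::R2) \<le> \<bar>v$1\<bar> + \<bar>v$2\<bar>"
  using norm_le_l1_cart[of v] by (simp add: sum_2)

lemma final_alg:
  fixes u w u' w' \<xi> :: R2
  assumes dx: "det (cols (s *\<^sub>R u) (t *\<^sub>R w)) \<noteq> 0"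
      and dy: "det (cols (s *\<^sub>R u') (t *\<^sub>R w')) \<noteq> 0"
      and e1: "s *\<^sub>R u' = (s * (1 + f11)) *\<^sub>R u + (t * f21) *\<^sub>R w"
      and e2: "t *\<^sub>R w' = (s * f12) *\<^sub>R u + (t * (1 + f22)) *\<^sub>R w"
      and F: "\<bar>f11\<bar> + \<bar>f12\<bar> + \<bar>f21\<bar> + \<bar>f22\<bar> \<le> 1/2"
  shows "(1/4) * anorm (cols (s *\<^sub>R u) (t *\<^sub>R w)) \<xi> \<le> anorm (cols (s *\<^sub>R u') (t *\<^sub>R w')) \<xi> \<and>
         anorm (cols (s *\<^sub>R u') (t *\<^sub>R w')) \<xi> \<le> 4 * anorm (cols (s *\<^sub>R u) (t *\<^sub>R w)) \<xi>"
proof -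
  obtain \<zeta> where z: "cols (s *\<^sub>R u') (t *\<^sub>R w') *v \<zeta> = \<xi>" and az: "anorm (cols (s *\<^sub>R u') (t *\<^sub>R w')) \<xi> = norm \<zeta>"
    using anorm_ex[OF dy] by blast
  define \<eta> :: R2 where "\<eta> = (\<chi> i. if i = 1 then (1 + f11) * \<zeta>$1 + f12 * \<zeta>$2 else f21 * \<zeta>$1 + (1 + f22) * \<zeta>$2)"
  have \<eta>1: "\<eta>$1 = (1 + f11) * \<zeta>$1 + f12 * \<zeta>$2" and \<eta>2: "\<eta>$2 = f21 * \<zeta>$1 + (1 + f22) * \<zeta>$2"
    by (simp_all add: \<eta>_def)
  have "cols (s *\<^sub>R u) (t *\<^sub>R w) *v \<eta> = \<zeta>$1 *\<^sub>R (s *\<^sub>R u') + \<zeta>$2 *\<^sub>R (t *\<^sub>R w')"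
    unfolding cols_mult \<eta>1 \<eta>2 e1 e2 by (simp add: algebra_simps)
  also have "\<dots> = \<xi>" using z unfolding cols_mult .
  finally have ax: "anorm (cols (s *\<^sub>R u) (t *\<^sub>R w)) \<xi> = norm \<eta>" using anorm_eq[OF dx] by blast
  have "norm (\<eta> - \<zeta>) \<le> \<bar>(\<eta> - \<zeta>)$1\<bar> + \<bar>(\<eta> - \<zeta>)$2\<bar>" by (rule norm_le_2)
  also have "\<dots> = \<bar>f11 * \<zeta>$1 + f12 * \<zeta>$2\<bar> + \<bar>f21 * \<zeta>$1 + f22 * \<zeta>$2\<bar>"
    by (simp add: \<eta>1 \<eta>2 algebra_simps)
  also have "\<dots> \<le> (\<bar>f11\<bar> + \<bar>f12\<bar> + \<bar>f21\<bar> + \<bar>f22\<bar>) * norm \<zeta>"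
  proof -
    have z1: "\<bar>\<zeta>$1\<bar> \<le> norm \<zeta>" and z2: "\<bar>\<zeta>$2\<bar> \<le> norm \<zeta>" by (rule component_le_norm_cart)+
    have "\<bar>f11 * \<zeta>$1\<bar> \<le> \<bar>f11\<bar> * norm \<zeta>" using z1 by (simp add: abs_mult mult_left_mono)
    moreover have "\<bar>f12 * \<zeta>$2\<bar> \<le> \<bar>f12\<bar> * norm \<zeta>" using z2 by (simp add: abs_mult mult_left_mono)
    moreover have "\<bar>f21 * \<zeta>$1\<bar> \<le> \<bar>f21\<bar> * norm \<zeta>" using z1 by (simp add: abs_mult mult_left_mono)
    moreover have "\<bar>f22 * \<zeta>$2\<bar> \<le> \<bar>f22\<bar> * norm \<zeta>" using z2 by (simp add: abs_mult mult_left_mono)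
    ultimately show ?thesis by (simp add: algebra_simps) (smt (verit) abs_triangle_ineq)
  qed
  also have "\<dots> \<le> (1/2) * norm \<zeta>" using F by (intro mult_right_mono) auto
  finally have d: "norm (\<eta> - \<zeta>) \<le> (1/2) * norm \<zeta>" .
  have "norm \<eta> \<le> norm \<zeta> + norm (\<eta> - \<zeta>)" using norm_triangle_ineq[of \<zeta> "\<eta> - \<zeta>"] by simp
  moreover have "norm \<zeta> \<le> norm \<eta> + norm (\<eta> - \<zeta>)" using norm_triangle_ineq4[of \<eta> "\<eta> - \<zeta>"] by simp
  ultimately show ?thesis unfolding ax az using d by linarith
qed

lemma lie_expand: "lie b \<sigma> z = (\<sigma> z$1 *\<^sub>R pd 1 b z + \<sigma> z$2 *\<^sub>R pd 2 b z) - (b z$1 *\<^sub>R pd 1 \<sigma> z + b z$2 *\<^sub>R pd 2 \<sigma> z)"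
  by (simp add: lie_def dd_def sum_2)

lemma term_bound:
  fixes P P' :: R2
  assumes "\<bar>a' - a\<bar> \<le> 2 * N * H" "norm P' \<le> N" "\<bar>a\<bar> \<le> N" "norm (P' - P) \<le> 2 * N * H" "0 \<le> N" "0 \<le> H"
  shows "norm (a' *\<^sub>R P' - a *\<^sub>R P) \<le> 4 * N^2 * H"
proof -
  have "a' *\<^sub>R P' - a *\<^sub>R P = (a' - a) *\<^sub>R P' + a *\<^sub>R (P' - P)" by (simp add: algebra_simps)
  then have "norm (a' *\<^sub>R P' - a *\<^sub>R P) \<le> \<bar>a' - a\<bar> * norm P' + \<bar>a\<bar> * norm (P' - P)"
    using norm_triangle_ineq[of "(a' - a) *\<^sub>R P'" "a *\<^sub>R (P' - P)"] by simp
  also have "\<dots> \<le> (2 * N * H) * N + N * (2 * N * H)"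
    using assms by (intro add_mono mult_mono) auto
  finally show ?thesis by (simp add: power2_eq_square algebra_simps)
qed

lemma term_bound0:
  fixes P :: R2
  assumes "norm P \<le> N" "\<bar>a\<bar> \<le> N" "0 \<le> N"
  shows "norm (a *\<^sub>R P) \<le> N^2"
  using assms by (simp add: power2_eq_square mult_mono)

lemma lie_bounds:
  assumes gs: "good \<sigma> x N" and gb: "good b x N" and h: "norm (y - x) < 1"
  shows "norm (lie b \<sigma> x) \<le> 4 * N^2" "norm (lie b \<sigma> y - lie b \<sigma> x) \<le> 16 * N^2 * norm (y - x)"
proof -
  let ?H = "norm (y - x)"
  note C = corner[OF h]
  have bs: "norm (\<sigma> z) \<le> N \<and> norm (pd 1 \<sigma> z) \<le> N \<and> norm (pd 2 \<sigma> z) \<le> N" if "dist z x < 1" for z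
    using gs that unfolding good_def by blast
  have bb: "norm (b z) \<le> N \<and> norm (pd 1 b z) \<le> N \<and> norm (pd 2 b z) \<le> N" if "dist z x < 1" for z
    using gb that unfolding good_def by blast
  have N0: "0 \<le> N" using bs[OF C(4)] norm_ge_zero[of "\<sigma> x"] by linarith
  have comp: "\<bar>v$i\<bar> \<le> N" if "norm v \<le> N" for v :: R2 and i
    using component_le_norm_cart[of v i] that by linarith
  have compd: "\<bar>f y$i - f x$i\<bar> \<le> 2 * N * ?H" if "norm (f y - f x) \<le> 2 * N * ?H" for f :: "R2 \<Rightarrow> R2" and i
    using component_le_norm_cart[of "f y - f x" i] that by simp
  have ls: "norm (\<sigma> y - \<sigma> x) \<le> 2 * N * ?H" using lip_f[OF gs h] .
  have lb: "norm (b y - b x) \<le> 2 * N * ?H" using lip_f[OF gb h] .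
  have ls1: "norm (pd 1 \<sigma> y - pd 1 \<sigma> x) \<le> 2 * N * ?H" using lip_pd1[OF gs h] .
  have ls2: "norm (pd 2 \<sigma> y - pd 2 \<sigma> x) \<le> 2 * N * ?H" using lip_pd2[OF gs h] .
  have lb1: "norm (pd 1 b y - pd 1 b x) \<le> 2 * N * ?H" using lip_pd1[OF gb h] .
  have lb2: "norm (pd 2 b y - pd 2 b x) \<le> 2 * N * ?H" using lip_pd2[OF gb h] .
  have H0: "0 \<le> ?H" by simp
  have t1: "norm (\<sigma> y$1 *\<^sub>R pd 1 b y - \<sigma> x$1 *\<^sub>R pd 1 b x) \<le> 4 * N^2 * ?H"
    by (rule term_bound[OF compd[OF ls] conjunct1[OF conjunct2[OF bb[OF C(3)]]] comp[OF conjunct1[OF bs[OF C(4)]]] lb1 N0 H0])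
  have t2: "norm (\<sigma> y$2 *\<^sub>R pd 2 b y - \<sigma> x$2 *\<^sub>R pd 2 b x) \<le> 4 * N^2 * ?H"
    by (rule term_bound[OF compd[OF ls] conjunct2[OF conjunct2[OF bb[OF C(3)]]] comp[OF conjunct1[OF bs[OF C(4)]]] lb2 N0 H0])
  have t3: "norm (b y$1 *\<^sub>R pd 1 \<sigma> y - b x$1 *\<^sub>R pd 1 \<sigma> x) \<le> 4 * N^2 * ?H"
    by (rule term_bound[OF compd[OF lb] conjunct1[OF conjunct2[OF bs[OF C(3)]]] comp[OF conjunct1[OF bb[OF C(4)]]] ls1 N0 H0])
  have t4: "norm (b y$2 *\<^sub>R pd 2 \<sigma> y - b x$2 *\<^sub>R pd 2 \<sigma> x) \<le> 4 * N^2 * ?H"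
    by (rule term_bound[OF compd[OF lb] conjunct2[OF conjunct2[OF bs[OF C(3)]]] comp[OF conjunct1[OF bb[OF C(4)]]] ls2 N0 H0])
  have eq: "lie b \<sigma> y - lie b \<sigma> x = ((\<sigma> y$1 *\<^sub>R pd 1 b y - \<sigma> x$1 *\<^sub>R pd 1 b x) + (\<sigma> y$2 *\<^sub>R pd 2 b y - \<sigma> x$2 *\<^sub>R pd 2 b x))
     - ((b y$1 *\<^sub>R pd 1 \<sigma> y - b x$1 *\<^sub>R pd 1 \<sigma> x) + (b y$2 *\<^sub>R pd 2 \<sigma> y - b x$2 *\<^sub>R pd 2 \<sigma> x))"
    unfolding lie_expand by (simp add: algebra_simps)
  show "norm (lie b \<sigma> y - lie b \<sigma> x) \<le> 16 * N^2 * ?H"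
    unfolding eq
  proof -
    let ?A = "\<sigma> y$1 *\<^sub>R pd 1 b y - \<sigma> x$1 *\<^sub>R pd 1 b x"
    let ?B = "\<sigma> y$2 *\<^sub>R pd 2 b y - \<sigma> x$2 *\<^sub>R pd 2 b x"
    let ?C = "b y$1 *\<^sub>R pd 1 \<sigma> y - b x$1 *\<^sub>R pd 1 \<sigma> x"
    let ?D = "b y$2 *\<^sub>R pd 2 \<sigma> y - b x$2 *\<^sub>R pd 2 \<sigma> x"
    have "norm ((?A + ?B) - (?C + ?D)) \<le> norm (?A + ?B) + norm (?C + ?D)" by (rule norm_triangle_ineq4)
    moreover have "norm (?A + ?B) \<le> norm ?A + norm ?B" by (rule norm_triangle_ineq)
    moreover have "norm (?C + ?D) \<le> norm ?C + norm ?D" by (rule norm_triangle_ineq)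
    ultimately show "norm ((?A + ?B) - (?C + ?D)) \<le> 16 * N^2 * ?H" using t1 t2 t3 t4 by linarith
  qed
  have s1: "norm (\<sigma> x$1 *\<^sub>R pd 1 b x) \<le> N^2"
    by (rule term_bound0[OF conjunct1[OF conjunct2[OF bb[OF C(4)]]] comp[OF conjunct1[OF bs[OF C(4)]]] N0])
  have s2: "norm (\<sigma> x$2 *\<^sub>R pd 2 b x) \<le> N^2"
    by (rule term_bound0[OF conjunct2[OF conjunct2[OF bb[OF C(4)]]] comp[OF conjunct1[OF bs[OF C(4)]]] N0])
  have s3: "norm (b x$1 *\<^sub>R pd 1 \<sigma> x) \<le> N^2"
    by (rule term_bound0[OF conjunct1[OF conjunct2[OF bs[OF C(4)]]] comp[OF conjunct1[OF bb[OF C(4)]]] N0])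
  have s4: "norm (b x$2 *\<^sub>R pd 2 \<sigma> x) \<le> N^2"
    by (rule term_bound0[OF conjunct2[OF conjunct2[OF bs[OF C(4)]]] comp[OF conjunct1[OF bb[OF C(4)]]] N0])
  show "norm (lie b \<sigma> x) \<le> 4 * N^2"
    unfolding lie_expand
  proof -
    let ?A = "\<sigma> x$1 *\<^sub>R pd 1 b x" let ?B = "\<sigma> x$2 *\<^sub>R pd 2 b x"
    let ?C = "b x$1 *\<^sub>R pd 1 \<sigma> x" let ?D = "b x$2 *\<^sub>R pd 2 \<sigma> x"
    have "norm ((?A + ?B) - (?C + ?D)) \<le> norm (?A + ?B) + norm (?C + ?D)" by (rule norm_triangle_ineq4)
    moreover have "norm (?A + ?B) \<le> norm ?A + norm ?B" by (rule norm_triangle_ineq)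
    moreover have "norm (?C + ?D) \<le> norm ?C + norm ?D" by (rule norm_triangle_ineq)
    ultimately show "norm ((?A + ?B) - (?C + ?D)) \<le> 4 * N^2" using s1 s2 s3 s4 by linarith
  qed
qed

lemma p32: "0 < \<delta> \<Longrightarrow> \<delta> powr (3/2) = sqrt \<delta> ^ 2 * sqrt \<delta>"
proof -
  assume d: "0 < \<delta>"
  have "\<delta> powr (3/2) = \<delta> powr 1 * \<delta> powr (1/2)" using powr_add[of \<delta> 1 "1/2"] by simp
  also have "\<dots> = \<delta> * sqrt \<delta>" using d by (simp add: powr_half_sqrt)
  finally show ?thesis using d by simp
qed

lemma mono3: "0 \<le> a \<Longrightarrow> 0 \<le> b \<Longrightarrow> 0 \<le> c \<Longrightarrow> a \<le> A \<Longrightarrow> b \<le> B \<Longrightarrow> c \<le> (C::real) \<Longrightarrow> a * b * c \<le> A * B * C"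
  by (meson mult_mono mult_nonneg_nonneg order_trans)

lemma decomp_bd:
  fixes u w v :: R2
  assumes d: "\<bar>u$1 * w$2 - w$1 * u$2\<bar> \<ge> \<Lambda>" "\<Lambda> > 0" "1 / \<Lambda> \<le> M"
    and nu: "norm u \<le> M" and nw: "norm w \<le> 4 * M^2" and nv: "norm v \<le> V"
  shows "\<exists>\<alpha> \<beta>. v = \<alpha> *\<^sub>R u + \<beta> *\<^sub>R w \<and> \<bar>\<alpha>\<bar> \<le> 4 * M^2 * V * M \<and> \<bar>\<beta>\<bar> \<le> M * V * M"
proof -
  have dn: "u$1 * w$2 - w$1 * u$2 \<noteq> 0" using d by auto
  obtain \<alpha> \<beta> where ab: "v = \<alpha> *\<^sub>R u + \<beta> *\<^sub>R w"
    "\<bar>\<alpha>\<bar> \<le> norm w * norm v / \<bar>u$1 * w$2 - w$1 * u$2\<bar>"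
    "\<bar>\<beta>\<bar> \<le> norm u * norm v / \<bar>u$1 * w$2 - w$1 * u$2\<bar>"
    using decomp[OF dn, of v] by blast
  have id: "1 / \<bar>u$1 * w$2 - w$1 * u$2\<bar> \<le> M"
  proof -
    have "1 / \<bar>u$1 * w$2 - w$1 * u$2\<bar> \<le> 1 / \<Lambda>"
      using d by (intro divide_left_mono) auto
    then show ?thesis using d(3) by linarith
  qed
  have "\<bar>\<alpha>\<bar> \<le> norm w * norm v * (1 / \<bar>u$1 * w$2 - w$1 * u$2\<bar>)" using ab(2) by simp
  also have "\<dots> \<le> 4 * M^2 * V * M" using nw nv id by (intro mono3) auto
  finally have a: "\<bar>\<alpha>\<bar> \<le> 4 * M^2 * V * M" .
  have "\<bar>\<beta>\<bar> \<le> norm u * norm v * (1 / \<bar>u$1 * w$2 - w$1 * u$2\<bar>)" using ab(3) by simp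
  also have "\<dots> \<le> M * V * M" using nu nv id by (intro mono3) auto
  finally have b: "\<bar>\<beta>\<bar> \<le> M * V * M" .
  show ?thesis using ab(1) a b by blast
qed

lemma main:
  assumes H: "local_hyp \<sigma> b x \<Lambda> N"
    and \<delta>0: "0 < \<delta>" and \<delta>s: "\<delta> \<le> \<Lambda> / N"
    and A: "anorm (Adelta \<sigma> b \<delta> x) (x - y) \<le> 1 / (3000 * (N / \<Lambda>)^8)"
  shows "(1/4) * anorm (Adelta \<sigma> b \<delta> x) \<xi> \<le> anorm (Adelta \<sigma> b \<delta> y) \<xi> \<and>
         anorm (Adelta \<sigma> b \<delta> y) \<xi> \<le> 4 * anorm (Adelta \<sigma> b \<delta> x) \<xi>"
proof -
  have C: "0 < \<Lambda>" "\<Lambda> \<le> 1" "1 \<le> N"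
    and ball: "\<forall>z. dist z x < 1 \<longrightarrow> \<Lambda> \<le> lam \<sigma> b z \<and> nfun \<sigma> b z \<le> N"
    and K: "\<exists>\<kappa>::R2 \<Rightarrow> real. \<forall>z. dist z x < 1 \<longrightarrow> \<kappa> differentiable (at z) \<and> dd \<sigma> \<sigma> z = \<kappa> z *\<^sub>R \<sigma> z \<and>
        \<bar>\<kappa> z\<bar> \<le> nfun \<sigma> b z \<and> norm (grad \<kappa> z) \<le> nfun \<sigma> b z"
    using H unfolding local_hyp_def by auto
  have gs: "good \<sigma> x N" and gb: "good b x N" using local_good[OF H] by auto
  define M where "M = N / \<Lambda>"
  have NM: "N \<le> M" unfolding M_def using C by (simp add: le_divide_eq mult_left_le)
  have LM: "1 / \<Lambda> \<le> M" unfolding M_def using C by (simp add: divide_right_mono)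
  have M1: "1 \<le> M" using NM C by linarith
  have M0: "0 \<le> M" using M1 by linarith
  have Mp: "M^k \<le> M^8" if "k \<le> 8" for k using power_increasing[OF that M1] .
  define \<rho> where "\<rho> = 1 / (3000 * M^8)"
  have M8: "1 \<le> M^8" using M1 by simp
  have \<rho>0: "0 < \<rho>" using M8 M1 by (simp add: \<rho>_def)
  have \<rho>M: "M^8 * \<rho> = 1/3000" using M8 M1 by (simp add: \<rho>_def)
  have "\<rho> \<le> M^8 * \<rho>" using M8 \<rho>0 by (simp add: mult_le_cancel_right1)
  then have \<rho>1: "\<rho> \<le> 1" using \<rho>M by linarith
  define s where "s = sqrt \<delta>"
  have s0: "0 < s" using \<delta>0 by (simp add: s_def)
  have \<delta>1: "\<delta> \<le> 1"
  proof -
    have "\<Lambda> / N \<le> 1" using C by simp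
    then show ?thesis using \<delta>s by linarith
  qed
  have s1: "s \<le> 1" using \<delta>1 \<delta>0 by (simp add: s_def)
  define t where "t = \<delta> powr (3/2)"
  have t: "t = s^2 * s" unfolding t_def s_def using p32[OF \<delta>0] .
  have ts: "t \<le> s" using s0 s1 unfolding t by (simp add: mult_le_cancel_right1 power_le_one)
  have t0: "0 < t" using s0 unfolding t by simp
  have Ad: "Adelta \<sigma> b \<delta> z = cols (s *\<^sub>R \<sigma> z) (t *\<^sub>R lie b \<sigma> z)" for z
    unfolding Adelta_def s_def t_def ..
  define u where "u = \<sigma> x"
  define w where "w = lie b \<sigma> x"
  have xx: "dist x x < 1" by simp
  have "norm (\<sigma> x) \<le> N" using gs unfolding good_def by simp
  then have nu: "norm u \<le> M" using NM unfolding u_def by linarith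
  have nw: "norm w \<le> 4 * M^2"
  proof -
    have "norm w \<le> 4 * N^2" unfolding w_def using lie_bounds(1)[OF gs gb, of x] by simp
    also have "\<dots> \<le> 4 * M^2" using NM C by (simp add: power_mono)
    finally show ?thesis .
  qed
  have dA: "\<bar>u$1 * w$2 - w$1 * u$2\<bar> \<ge> \<Lambda>"
    using lam_det[of \<Lambda> \<sigma> b x] ball C xx by (simp add: Amat_def det_cols u_def w_def)
  have detx: "det (cols (s *\<^sub>R u) (t *\<^sub>R w)) \<noteq> 0"
  proof -
    have "det (cols (s *\<^sub>R u) (t *\<^sub>R w)) = (s * t) * (u$1 * w$2 - w$1 * u$2)"
      by (simp add: det_cols algebra_simps)
    then show ?thesis using dA C s0 t0 by auto
  qed
  obtain z0 where z0: "cols (s *\<^sub>R u) (t *\<^sub>R w) *v z0 = x - y" "anorm (cols (s *\<^sub>R u) (t *\<^sub>R w)) (x - y) = norm z0"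
    using anorm_ex[OF detx] by blast
  define a where "a = z0$1"
  define c where "c = z0$2"
  have nz0: "norm z0 \<le> \<rho>" using A z0(2) unfolding Ad u_def w_def \<rho>_def M_def by simp
  have ac: "\<bar>a\<bar> \<le> \<rho>" "\<bar>c\<bar> \<le> \<rho>" unfolding a_def c_def
    using component_le_norm_cart[of z0 1] component_le_norm_cart[of z0 2] nz0 by linarith+
  define h where "h = y - x"
  have hv: "h = - ((a * s) *\<^sub>R u + (c * t) *\<^sub>R w)"
    using z0(1) unfolding cols_mult h_def a_def c_def by (simp add: algebra_simps)
  have nh: "norm h \<le> 5 * M^2 * \<rho> * s"
  proof -
    have "norm h \<le> norm ((a * s) *\<^sub>R u) + norm ((c * t) *\<^sub>R w)"
      unfolding hv norm_minus_cancel by (rule norm_triangle_ineq)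
    also have "\<dots> = \<bar>a\<bar> * s * norm u + \<bar>c\<bar> * t * norm w"
      using s0 t0 by (simp add: abs_mult)
    also have "\<dots> \<le> \<rho> * s * M + \<rho> * s * (4 * M^2)"
      using ac nu nw ts s0 t0 by (intro add_mono mono3) auto
    also have "\<dots> \<le> \<rho> * s * M^2 + \<rho> * s * (4 * M^2)"
    proof -
      have "M \<le> M^2" using M1 by (simp add: power2_eq_square)
      then show ?thesis using \<rho>0 s0 by (simp add: mult_left_mono)
    qed
    finally show ?thesis by (simp add: algebra_simps)
  qed
  have h1: "norm (y - x) < 1"
  proof -
    have "5 * M^2 * \<rho> * s \<le> 5 * M^8 * \<rho> * 1"
      using Mp[of 2] \<rho>0 s0 s1 by (intro mono3) auto
    also have "\<dots> = 5 / 3000" using \<rho>M by simp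
    finally show ?thesis using nh unfolding h_def by simp
  qed
  note Cy = corner[OF h1]
  have dety: "det (cols (s *\<^sub>R \<sigma> y) (t *\<^sub>R lie b \<sigma> y)) \<noteq> 0"
  proof -
    have "\<bar>det (Amat \<sigma> b y)\<bar> \<ge> \<Lambda>" using lam_det[of \<Lambda> \<sigma> b y] ball C Cy(3) by simp
    moreover have "det (cols (s *\<^sub>R \<sigma> y) (t *\<^sub>R lie b \<sigma> y)) = (s * t) * det (Amat \<sigma> b y)"
      by (simp add: det_cols Amat_def algebra_simps)
    ultimately show ?thesis using C s0 t0 by auto
  qed
  obtain \<kappa> :: "R2 \<Rightarrow> real" where \<kappa>: "dd \<sigma> \<sigma> x = \<kappa> x *\<^sub>R \<sigma> x" "\<bar>\<kappa> x\<bar> \<le> nfun \<sigma> b x"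
    using K xx by blast
  define k where "k = \<kappa> x"
  have "nfun \<sigma> b x \<le> N" using ball by simp
  then have nk: "\<bar>k\<bar> \<le> M" using \<kappa>(2) NM unfolding k_def by linarith
  define P1 where "P1 = pd 1 \<sigma> x"
  define P2 where "P2 = pd 2 \<sigma> x"
  have nP: "norm P1 \<le> N" "norm P2 \<le> N" using gs xx unfolding good_def P1_def P2_def by auto
  have ddu: "u$1 *\<^sub>R P1 + u$2 *\<^sub>R P2 = k *\<^sub>R u"
    using \<kappa>(1) unfolding dd_def sum_2 u_def k_def P1_def P2_def .
  define Dw where "Dw = w$1 *\<^sub>R P1 + w$2 *\<^sub>R P2"
  have nDw: "norm Dw \<le> 8 * M^3"
  proof -
    have "norm Dw \<le> \<bar>w$1\<bar> * norm P1 + \<bar>w$2\<bar> * norm P2"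
      unfolding Dw_def using norm_triangle_ineq[of "w$1 *\<^sub>R P1" "w$2 *\<^sub>R P2"] by simp
    also have "\<dots> \<le> norm w * N + norm w * N"
      using nP component_le_norm_cart[of w 1] component_le_norm_cart[of w 2]
      by (intro add_mono mult_mono) auto
    also have "\<dots> \<le> (4 * M^2) * M + (4 * M^2) * M"
      using nw NM C by (intro add_mono mult_mono) auto
    also have "(4 * M^2) * M + (4 * M^2) * M = 8 * M^3" by algebra
    finally show ?thesis .
  qed
  define T where "T = \<sigma> y - \<sigma> x - (h$1 *\<^sub>R P1 + h$2 *\<^sub>R P2)"
  have nT: "norm T \<le> 3 * N * (norm h)^2"
    using taylor2[OF gs h1] unfolding T_def h_def P1_def P2_def .
  have hcomb: "h$1 *\<^sub>R P1 + h$2 *\<^sub>R P2 = - ((a * s * k) *\<^sub>R u) - (c * t) *\<^sub>R Dw"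
  proof -
    have hh: "h$1 = - (a * s * u$1 + c * t * w$1)" "h$2 = - (a * s * u$2 + c * t * w$2)"
      unfolding hv by simp_all
    have "h$1 *\<^sub>R P1 + h$2 *\<^sub>R P2 = (- (a * s * u$1 + c * t * w$1)) *\<^sub>R P1 + (- (a * s * u$2 + c * t * w$2)) *\<^sub>R P2"
      by (simp only: hh)
    also have "\<dots> = - ((a * s) *\<^sub>R (u$1 *\<^sub>R P1 + u$2 *\<^sub>R P2)) - (c * t) *\<^sub>R Dw"
      unfolding Dw_def by (simp add: algebra_simps)
    finally have "h$1 *\<^sub>R P1 + h$2 *\<^sub>R P2 = - ((a * s) *\<^sub>R (u$1 *\<^sub>R P1 + u$2 *\<^sub>R P2)) - (c * t) *\<^sub>R Dw" .
    then show ?thesis unfolding ddu by simp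
  qed
  define R where "R = T - (c * t) *\<^sub>R Dw"
  have uy: "\<sigma> y = (1 - a * s * k) *\<^sub>R u + R"
    unfolding R_def T_def hcomb u_def by (simp add: algebra_simps)
  have nR: "norm R \<le> 83 * M^5 * \<rho> * s^2"
  proof -
    have "norm R \<le> norm T + norm ((c * t) *\<^sub>R Dw)" unfolding R_def by (rule norm_triangle_ineq4)
    also have "\<dots> = norm T + \<bar>c\<bar> * t * norm Dw" using t0 by (simp add: abs_mult)
    also have "\<dots> \<le> 75 * M^5 * \<rho> * s^2 + 8 * M^5 * \<rho> * s^2"
    proof (rule add_mono)
      have "norm h ^ 2 \<le> (5 * M^2 * \<rho> * s)^2" using nh by (intro power_mono) auto
      then have "3 * N * (norm h)^2 \<le> 3 * M * (5 * M^2 * \<rho> * s)^2"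
        using NM C by (intro mult_mono) auto
      then have "norm T \<le> 3 * M * (5 * M^2 * \<rho> * s)^2" using nT by linarith
      also have "\<dots> = 75 * M^5 * (\<rho> * \<rho>) * s^2" by algebra
      also have "\<dots> \<le> 75 * M^5 * \<rho> * s^2"
      proof -
        have "\<rho> * \<rho> \<le> \<rho>" using \<rho>0 \<rho>1 by (simp add: mult_le_cancel_left1)
        then show ?thesis using M0 s0 by (intro mult_right_mono mult_left_mono) auto
      qed
      finally show "norm T \<le> 75 * M^5 * \<rho> * s^2" .
      have "\<bar>c\<bar> * t * norm Dw \<le> \<rho> * s^2 * (8 * M^3)"
        using ac nDw t s0 s1 by (intro mono3) (auto simp: mult_le_cancel_left1)
      also have "\<dots> \<le> \<rho> * s^2 * (8 * M^5)"
        using power_increasing[of 3 5 M] M1 \<rho>0 by (intro mult_left_mono) auto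
      also have "\<dots> = 8 * M^5 * \<rho> * s^2" by algebra
      finally show "\<bar>c\<bar> * t * norm Dw \<le> 8 * M^5 * \<rho> * s^2" .
    qed
    also have "75 * M^5 * \<rho> * s^2 + 8 * M^5 * \<rho> * s^2 = 83 * M^5 * \<rho> * s^2" by algebra
    finally show ?thesis .
  qed
  obtain \<alpha>R \<beta>R where dR: "R = \<alpha>R *\<^sub>R u + \<beta>R *\<^sub>R w"
    "\<bar>\<alpha>R\<bar> \<le> 4 * M^2 * (83 * M^5 * \<rho> * s^2) * M" "\<bar>\<beta>R\<bar> \<le> M * (83 * M^5 * \<rho> * s^2) * M"
    using decomp_bd[OF dA C(1) LM nu nw nR] by blast
  define f11 where "f11 = \<alpha>R - a * s * k"
  define f21 where "f21 = \<beta>R / s^2"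
  have e1: "s *\<^sub>R \<sigma> y = (s * (1 + f11)) *\<^sub>R u + (t * f21) *\<^sub>R w"
    unfolding uy dR(1) f11_def f21_def t using s0 by (simp add: algebra_simps power2_eq_square)
  have nV: "norm (lie b \<sigma> y - w) \<le> 80 * M^4 * \<rho> * s"
  proof -
    have "norm (lie b \<sigma> y - w) \<le> 16 * N^2 * norm h"
      using lie_bounds(2)[OF gs gb h1] unfolding w_def h_def .
    also have "\<dots> \<le> 16 * M^2 * (5 * M^2 * \<rho> * s)"
      using nh NM C by (intro mult_mono mult_left_mono power_mono) auto
    also have "\<dots> = 80 * M^4 * \<rho> * s" by algebra
    finally show ?thesis .
  qed
  obtain \<alpha>V \<beta>V where dV: "lie b \<sigma> y - w = \<alpha>V *\<^sub>R u + \<beta>V *\<^sub>R w"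
    "\<bar>\<alpha>V\<bar> \<le> 4 * M^2 * (80 * M^4 * \<rho> * s) * M" "\<bar>\<beta>V\<bar> \<le> M * (80 * M^4 * \<rho> * s) * M"
    using decomp_bd[OF dA C(1) LM nu nw nV] by blast
  define f12 where "f12 = s^2 * \<alpha>V"
  define f22 where "f22 = \<beta>V"
  have wy: "lie b \<sigma> y = \<alpha>V *\<^sub>R u + (1 + \<beta>V) *\<^sub>R w" using dV(1) by (simp add: algebra_simps)
  have e2: "t *\<^sub>R lie b \<sigma> y = (s * f12) *\<^sub>R u + (t * (1 + f22)) *\<^sub>R w"
    unfolding wy f12_def f22_def t by (simp add: algebra_simps power2_eq_square)
  have F: "\<bar>f11\<bar> + \<bar>f12\<bar> + \<bar>f21\<bar> + \<bar>f22\<bar> \<le> 1/2"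
  proof -
    have s2: "s^2 \<le> 1" using s0 s1 by (simp add: power_le_one)
    have f11b: "\<bar>f11\<bar> \<le> 333 * (M^8 * \<rho>)"
    proof -
      have "\<bar>f11\<bar> \<le> \<bar>\<alpha>R\<bar> + \<bar>a * s * k\<bar>" unfolding f11_def by (rule abs_triangle_ineq4)
      also have "\<bar>a * s * k\<bar> = \<bar>a\<bar> * s * \<bar>k\<bar>" using s0 by (simp add: abs_mult)
      also have "\<bar>a\<bar> * s * \<bar>k\<bar> \<le> \<rho> * 1 * M" using ac s0 s1 nk by (intro mono3) auto
      also have "\<bar>\<alpha>R\<bar> \<le> 332 * (M^8 * \<rho>)"
      proof -
        have eq: "4 * M^2 * (83 * M^5 * \<rho> * s^2) * M = 332 * (M^8 * \<rho>) * s^2" by algebra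
        have "\<bar>\<alpha>R\<bar> \<le> 332 * (M^8 * \<rho>) * s^2" using dR(2) by (simp only: eq)
        also have "\<dots> \<le> 332 * (M^8 * \<rho>) * 1" using s2 \<rho>0 M0 by (intro mult_left_mono) auto
        finally show ?thesis by simp
      qed
      moreover have "\<rho> * 1 * M \<le> M^8 * \<rho>" using Mp[of 1] \<rho>0 by (simp add: mult.commute mult_left_mono)
      ultimately show ?thesis by linarith
    qed
    have f21b: "\<bar>f21\<bar> \<le> 83 * (M^8 * \<rho>)"
    proof -
      have "\<bar>f21\<bar> = \<bar>\<beta>R\<bar> / s^2" unfolding f21_def by (simp add: abs_div)
      also have "\<dots> \<le> (83 * (M^7 * \<rho>) * s^2) / s^2"
      proof (rule divide_right_mono)
        have eq: "M * (83 * M^5 * \<rho> * s^2) * M = 83 * (M^7 * \<rho>) * s^2" by algebra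
        show "\<bar>\<beta>R\<bar> \<le> 83 * (M^7 * \<rho>) * s^2" using dR(3) by (simp only: eq)
      qed simp
      also have "\<dots> = 83 * (M^7 * \<rho>)" using s0 by simp
      also have "\<dots> \<le> 83 * (M^8 * \<rho>)" using Mp[of 7] \<rho>0 by (intro mult_left_mono mult_right_mono) auto
      finally show ?thesis .
    qed
    have f12b: "\<bar>f12\<bar> \<le> 320 * (M^8 * \<rho>)"
    proof -
      have "\<bar>f12\<bar> = s^2 * \<bar>\<alpha>V\<bar>" unfolding f12_def by (simp add: abs_mult)
      also have "\<dots> \<le> 1 * (320 * (M^7 * \<rho>) * 1)"
      proof (rule mult_mono[OF s2])
        have eq: "4 * M^2 * (80 * M^4 * \<rho> * s) * M = 320 * (M^7 * \<rho>) * s" by algebra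
        have "\<bar>\<alpha>V\<bar> \<le> 320 * (M^7 * \<rho>) * s" using dV(2) by (simp only: eq)
        also have "\<dots> \<le> 320 * (M^7 * \<rho>) * 1" using s1 \<rho>0 M0 by (intro mult_left_mono) auto
        finally show "\<bar>\<alpha>V\<bar> \<le> 320 * (M^7 * \<rho>) * 1" .
      qed auto
      also have "\<dots> \<le> 320 * (M^8 * \<rho>)" using Mp[of 7] \<rho>0 by (simp add: mult_right_mono)
      finally show ?thesis .
    qed
    have f22b: "\<bar>f22\<bar> \<le> 80 * (M^8 * \<rho>)"
    proof -
      have eq: "M * (80 * M^4 * \<rho> * s) * M = 80 * (M^6 * \<rho>) * s" by algebra
      have "\<bar>f22\<bar> \<le> 80 * (M^6 * \<rho>) * s" unfolding f22_def using dV(3) by (simp only: eq)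
      also have "\<dots> \<le> 80 * (M^6 * \<rho>) * 1" using s1 \<rho>0 M0 by (intro mult_left_mono) auto
      also have "\<dots> \<le> 80 * (M^8 * \<rho>)" using Mp[of 6] \<rho>0 by (simp add: mult_right_mono)
      finally show ?thesis .
    qed
    show ?thesis using f11b f12b f21b f22b \<rho>M by linarith
  qed
  show ?thesis unfolding Ad u_def[symmetric] w_def[symmetric]
    using final_alg[OF detx dety e1 e2 F] by simp
qed

theorem lemmaA4:
  "\<exists>K1 q1 K2 q2 :: real. 1 \<le> K1 \<and> 1 \<le> q1 \<and> 1 \<le> K2 \<and> 1 \<le> q2 \<and>
    (\<forall>\<sigma> b x \<Lambda> N. local_hyp \<sigma> b x \<Lambda> N \<longrightarrow>
      (let \<rho> = 1 / (K1 * (N / \<Lambda>) powr q1);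
           \<delta>s = 1 / (K2 * (N / \<Lambda>) powr q2)
       in \<forall>y \<delta> \<xi>. 0 < \<delta> \<and> \<delta> \<le> \<delta>s \<and> anorm (Adelta \<sigma> b \<delta> x) (x - y) \<le> \<rho> \<longrightarrow>
            (1/4) * anorm (Adelta \<sigma> b \<delta> x) \<xi> \<le> anorm (Adelta \<sigma> b \<delta> y) \<xi> \<and>
            anorm (Adelta \<sigma> b \<delta> y) \<xi> \<le> 4 * anorm (Adelta \<sigma> b \<delta> x) \<xi>))"
proof (rule exI[of _ 3000], rule exI[of _ 8], rule exI[of _ 1], rule exI[of _ 1], intro conjI allI impI)
  fix \<sigma> b x \<Lambda> N
  assume H: "local_hyp \<sigma> b x \<Lambda> N"
  have C: "0 < \<Lambda>" "1 \<le> N" using H unfolding local_hyp_def by auto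
  have pos: "0 < N / \<Lambda>" using C by simp
  have pw: "(N / \<Lambda>) powr 8 = (N / \<Lambda>)^8" using powr_realpow[OF pos, of 8] by simp
  have p1: "(N / \<Lambda>) powr 1 = N / \<Lambda>" using pos by (simp only: powr_one_gt_zero_iff powr_one less_imp_le)
  have ds: "1 / (1 * (N / \<Lambda>)) = \<Lambda> / N" by simp
  show "let \<rho> = 1 / (3000 * (N / \<Lambda>) powr 8);
           \<delta>s = 1 / (1 * (N / \<Lambda>) powr 1)
       in \<forall>y \<delta> \<xi>. 0 < \<delta> \<and> \<delta> \<le> \<delta>s \<and> anorm (Adelta \<sigma> b \<delta> x) (x - y) \<le> \<rho> \<longrightarrow>
            (1/4) * anorm (Adelta \<sigma> b \<delta> x) \<xi> \<le> anorm (Adelta \<sigma> b \<delta> y) \<xi> \<and>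
            anorm (Adelta \<sigma> b \<delta> y) \<xi> \<le> 4 * anorm (Adelta \<sigma> b \<delta> x) \<xi>"
    unfolding Let_def pw p1 ds
  proof (intro allI impI)
    fix y \<delta> \<xi>
    assume a: "0 < \<delta> \<and> \<delta> \<le> \<Lambda> / N \<and> anorm (Adelta \<sigma> b \<delta> x) (x - y) \<le> 1 / (3000 * (N / \<Lambda>) ^ 8)"
    show "(1/4) * anorm (Adelta \<sigma> b \<delta> x) \<xi> \<le> anorm (Adelta \<sigma> b \<delta> y) \<xi> \<and>
            anorm (Adelta \<sigma> b \<delta> y) \<xi> \<le> 4 * anorm (Adelta \<sigma> b \<delta> x) \<xi>"
      using main[OF H] a by blast
  qed
qed simp_all

end
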